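(* Let $P_n$ be the path on $n$ vertices. Then $\mathrm{GG}(P_n) \sim \pi\sqrt{n-2}$ as $n \to \infty$, i.e. $\lim_{n\to\infty} \mathrm{GG}(P_n)/(\pi\sqrt{n-2}) = 1$.
   Context: For a connected graph $G$ and an edge $uv$, let $n_u$ (resp. $n_v$) be the number of vertices of $G$ strictly closer (in shortest-path distance) to $u$ than to $v$ (resp. to $v$ than to $u$). The Graovac-Ghorbani index is $\mathrm{GG}(G) = \sum_{uv \in E(G)} \sqrt{\frac{n_u + n_v - 2}{n_u n_v}}$. *)

theory Defs
  imports "HOL-Analysis.Analysis"
begin

definition simple_graph :: "'a set \<Rightarrow> ('a \<Rightarrow> 'a \<Rightarrow> bool) \<Rightarrow> bool" where
  "simple_graph V E \<longleftrightarrow> finite V \<and> (\<forall>u v. E u v \<longrightarrow> u \<in> V \<and> v \<in> V)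
     \<and> (\<forall>u v. E u v \<longrightarrow> E v u) \<and> (\<forall>u. \<not> E u u)"

text \<open>A walk of length k from u to v: vertex list of length k+1.\<close>
definition is_walk :: "('a \<Rightarrow> 'a \<Rightarrow> bool) \<Rightarrow> 'a list \<Rightarrow> bool" where
  "is_walk E xs \<longleftrightarrow> xs \<noteq> [] \<and> (\<forall>i. Suc i < length xs \<longrightarrow> E (xs ! i) (xs ! Suc i))"

definition gdist :: "('a \<Rightarrow> 'a \<Rightarrow> bool) \<Rightarrow> 'a \<Rightarrow> 'a \<Rightarrow> nat" where
  "gdist E u v = (LEAST k. \<exists>xs. is_walk E xs \<and> hd xs = u \<and> last xs = v \<and> length xs = Suc k)"

definition connected_graph :: "'a set \<Rightarrow> ('a \<Rightarrow> 'a \<Rightarrow> bool) \<Rightarrow> bool" where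
  "connected_graph V E \<longleftrightarrow> simple_graph V E \<and> V \<noteq> {} \<and>
     (\<forall>u\<in>V. \<forall>v\<in>V. \<exists>xs. is_walk E xs \<and> hd xs = u \<and> last xs = v)"

definition n_closer :: "'a set \<Rightarrow> ('a \<Rightarrow> 'a \<Rightarrow> bool) \<Rightarrow> 'a \<Rightarrow> 'a \<Rightarrow> nat" where
  "n_closer V E u v = card {w \<in> V. gdist E w u < gdist E w v}"

definition edges :: "('a \<Rightarrow> 'a \<Rightarrow> bool) \<Rightarrow> 'a set set" where
  "edges E = {{u, v} | u v. E u v}"

text \<open>Graovac-Ghorbani index: sum over (unordered) edges. The summand is
symmetric in u and v, so we pick any orientation of the edge.\<close>
definition GG :: "'a set \<Rightarrow> ('a \<Rightarrow> 'a \<Rightarrow> bool) \<Rightarrow> real" where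
  "GG V E = (\<Sum>e\<in>edges E. let (u, v) = (SOME p. e = {fst p, snd p} \<and> E (fst p) (snd p));
       nu = real (n_closer V E u v); nv = real (n_closer V E v u)
     in sqrt ((nu + nv - 2) / (nu * nv)))"

definition path_V :: "nat \<Rightarrow> nat set" where
  "path_V n = {0..<n}"

definition path_E :: "nat \<Rightarrow> nat \<Rightarrow> nat \<Rightarrow> bool" where
  "path_E n i j \<longleftrightarrow> i < n \<and> j < n \<and> (j = Suc i \<or> i = Suc j)"

end

theory Submission
  imports Defs
begin


lemma is_walk_Cons2: "is_walk E (a#b#ys) \<longleftrightarrow> E a b \<and> is_walk E (b#ys)"
  unfolding is_walk_def
  by (auto simp: less_Suc_eq_0_disj)

definition pd :: "nat \<Rightarrow> nat \<Rightarrow> nat" where "pd u v = (u - v) + (v - u)"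

lemma walk_dist_bound:
  "is_walk (path_E n) xs \<Longrightarrow> pd (hd xs) (last xs) < length xs"
proof (induction xs)
  case Nil then show ?case by (simp add: is_walk_def)
next
  case (Cons a xs)
  show ?case
  proof (cases xs)
    case Nil then show ?thesis by (simp add: pd_def)
  next
    case (Cons b ys)
    with Cons.prems have e: "path_E n a b" and w: "is_walk (path_E n) xs"
      by (auto simp: is_walk_Cons2)
    have "pd b (last xs) < length xs" using Cons.IH[OF w] Cons by simp
    moreover have "last (a # xs) = last xs" "hd (a # xs) = a" using Cons by auto
    moreover have "pd a (last xs) \<le> Suc (pd b (last xs))" using e unfolding pd_def path_E_def by arith
    ultimately show ?thesis using Cons by simp
  qed
qed

lemma walk_exists:
  assumes "u < n" "v < n"
  shows "\<exists>xs. is_walk (path_E n) xs \<and> hd xs = u \<and> last xs = v \<and> length xs = Suc (pd u v)"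
proof (cases "u \<le> v")
  case True
  let ?xs = "map (\<lambda>i. u + i) [0..<Suc (v - u)]"
  have "is_walk (path_E n) ?xs" using True assms unfolding is_walk_def path_E_def
    by (auto simp del: upt_Suc)
  moreover have "hd ?xs = u" by (simp add: hd_map del: upt_Suc)
  moreover have "last ?xs = v" using True by (simp add: last_map del: upt_Suc)
  ultimately show ?thesis using True by (auto simp: pd_def simp del: upt_Suc)
next
  case False
  let ?xs = "map (\<lambda>i. u - i) [0..<Suc (u - v)]"
  have "is_walk (path_E n) ?xs" using False assms unfolding is_walk_def path_E_def
    by (auto simp del: upt_Suc)
  moreover have "hd ?xs = u" by (simp add: hd_map del: upt_Suc)
  moreover have "last ?xs = v" using False by (simp add: last_map del: upt_Suc)
  ultimately show ?thesis using False by (auto simp: pd_def simp del: upt_Suc)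
qed

lemma gdist_path: "u < n \<Longrightarrow> v < n \<Longrightarrow> gdist (path_E n) u v = pd u v"
  unfolding gdist_def
proof (rule Least_equality)
  assume "u < n" "v < n"
  then show "\<exists>xs. is_walk (path_E n) xs \<and> hd xs = u \<and> last xs = v \<and> length xs = Suc (pd u v)"
    by (rule walk_exists)
next
  fix k assume "\<exists>xs. is_walk (path_E n) xs \<and> hd xs = u \<and> last xs = v \<and> length xs = Suc k"
  then obtain xs where "is_walk (path_E n) xs" "hd xs = u" "last xs = v" "length xs = Suc k" by blast
  then show "pd u v \<le> k" using walk_dist_bound[of n xs] by simp
qed

lemma ncl1: "Suc i < n \<Longrightarrow> n_closer (path_V n) (path_E n) i (Suc i) = Suc i"
proof -
  assume a: "Suc i < n"
  have "{w \<in> path_V n. gdist (path_E n) w i < gdist (path_E n) w (Suc i)} = {..i}"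
    using a by (auto simp: path_V_def gdist_path pd_def)
  then show ?thesis by (simp add: n_closer_def)
qed

lemma ncl2: "Suc i < n \<Longrightarrow> n_closer (path_V n) (path_E n) (Suc i) i = n - Suc i"
proof -
  assume a: "Suc i < n"
  have "{w \<in> path_V n. gdist (path_E n) w (Suc i) < gdist (path_E n) w i} = {Suc i..<n}"
    using a by (auto simp: path_V_def gdist_path pd_def)
  then show ?thesis by (simp add: n_closer_def)
qed

lemma edges_path: "edges (path_E n) = (\<lambda>i. {i, Suc i}) ` {..<n-1}"
    unfolding edges_def path_E_def
  apply (auto simp: insert_commute)
  subgoal for x by (rule exI[of _ x], rule exI[of _ "Suc x"]) auto
  done

lemma GG_path:
  "GG (path_V n) (path_E n) = (\<Sum>i<n-1. sqrt ((real (Suc i) + real (n - Suc i) - 2) / (real (Suc i) * real (n - Suc i))))"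
proof -
  let ?c = "\<lambda>i. sqrt ((real (Suc i) + real (n - Suc i) - 2) / (real (Suc i) * real (n - Suc i)))"
  let ?s = "\<lambda>e. let (u, v) = (SOME p. e = {fst p, snd p} \<and> path_E n (fst p) (snd p));
       nu = real (n_closer (path_V n) (path_E n) u v); nv = real (n_closer (path_V n) (path_E n) v u)
     in sqrt ((nu + nv - 2) / (nu * nv))"
  have inj: "inj_on (\<lambda>i. {i, Suc i}) {..<n-1}"
    by (auto simp: inj_on_def doubleton_eq_iff)
  have eq: "?s {i, Suc i} = ?c i" if "i < n - 1" for i
  proof -
    define p where "p = (SOME p. {i, Suc i} = {fst p, snd p} \<and> path_E n (fst p) (snd p))"
    have "{i, Suc i} = {fst p, snd p} \<and> path_E n (fst p) (snd p)"
      unfolding p_def by (rule someI[of _ "(i, Suc i)"]) (use that in \<open>auto simp: path_E_def\<close>)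
    then have disj: "p = (i, Suc i) \<or> p = (Suc i, i)"
      by (cases p) (auto simp: doubleton_eq_iff)
    have si: "Suc i < n" using that by simp
    have n1: "n_closer (path_V n) (path_E n) i (Suc i) = Suc i" by (rule ncl1[OF si])
    have n2: "n_closer (path_V n) (path_E n) (Suc i) i = n - Suc i" by (rule ncl2[OF si])
    have unf: "?s {i, Suc i} = (let (u, v) = p;
       nu = real (n_closer (path_V n) (path_E n) u v); nv = real (n_closer (path_V n) (path_E n) v u)
     in sqrt ((nu + nv - 2) / (nu * nv)))" unfolding p_def by (rule refl)
    from disj show ?thesis
    proof
      assume h: "p = (i, Suc i)"
      show ?thesis unfolding unf h by (simp only: Let_def case_prod_conv n1 n2)
    next
      assume h: "p = (Suc i, i)"
      have "?s {i, Suc i} = sqrt ((real (n - Suc i) + real (Suc i) - 2) / (real (n - Suc i) * real (Suc i)))"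
        unfolding unf h by (simp only: Let_def case_prod_conv n1 n2)
      also have "\<dots> = ?c i" by (simp only: add.commute mult.commute)
      finally show ?thesis .
    qed
  qed
  have "GG (path_V n) (path_E n) = sum ?s ((\<lambda>i. {i, Suc i}) ` {..<n-1})"
    unfolding GG_def edges_path by (rule refl)
  also have "\<dots> = sum (?s \<circ> (\<lambda>i. {i, Suc i})) {..<n-1}" by (rule sum.reindex[OF inj])
  also have "\<dots> = sum ?c {..<n-1}"
    by (rule sum.cong[OF refl]) (simp only: o_def, rule eq, simp)
  finally show ?thesis .
qed



definition fr :: "nat \<Rightarrow> real \<Rightarrow> real" where "fr n x = 1 / sqrt (x * (real n - x))"
definition G :: "nat \<Rightarrow> real \<Rightarrow> real" where "G n x = arcsin (2*x/real n - 1)"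

lemma G_deriv:
  assumes "0 < x" "x < real n"
  shows "(G n has_real_derivative fr n x) (at x)"
proof -
  have n: "real n > 0" using assms by linarith
  let ?y = "2*x/real n - 1"
  have nn: "n \<noteq> 0" using n by auto
  have y1: "-1 < ?y" "?y < 1" using assms n nn by (auto simp: field_simps)
  have d1: "DERIV arcsin ?y :> inverse (sqrt(1-?y^2))" by (rule DERIV_arcsin[OF y1])
  have d2: "((\<lambda>x. 2*x/real n - 1) has_real_derivative 2/real n) (at x)" using nn by (auto intro!: derivative_eq_intros)
  have d: "((\<lambda>x. arcsin (2*x/real n - 1)) has_real_derivative inverse (sqrt (1 - ?y^2)) * (2/real n)) (at x)"
    using DERIV_chain2[OF d1 d2] by simp
  have e: "1 - ?y^2 = (2/real n)^2 * (x*(real n - x))" using n by (simp add: field_simps power2_eq_square)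
  have p: "x*(real n - x) > 0" using assms by simp
  have "sqrt (1 - ?y^2) = (2/real n) * sqrt (x*(real n - x))" unfolding e real_sqrt_mult using n by simp
  hence "inverse (sqrt (1 - ?y^2)) * (2/real n) = fr n x" using n p by (simp add: fr_def field_simps)
  with d show ?thesis unfolding G_def by simp
qed

lemma G_cont: "0 < n \<Longrightarrow> continuous_on {0..real n} (G n)"
  unfolding G_def by (intro continuous_intros) (auto simp: field_simps)

lemma G_mvt:
  assumes "0 \<le> a" "a < b" "b \<le> real n"
  shows "\<exists>z. a < z \<and> z < b \<and> G n b - G n a = (b - a) * fr n z"
proof -
  have n: "0 < n" using assms by simp
  have c: "continuous_on {a..b} (G n)"
    by (rule continuous_on_subset[OF G_cont[OF n]]) (use assms in auto)
  have "\<And>x. a < x \<Longrightarrow> x < b \<Longrightarrow> G n differentiable (at x)"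
    using G_deriv assms real_differentiable_def by (metis le_less_trans less_le_trans)
  from MVT[OF assms(2) c this] obtain l z where
    "a < z" "z < b" "DERIV (G n) z :> l" "G n b - G n a = (b - a) * l" by blast
  moreover have "DERIV (G n) z :> fr n z" using G_deriv \<open>a < z\<close> \<open>z < b\<close> assms by auto
  ultimately show ?thesis using DERIV_unique by blast
qed

lemma fr_mono1:
  assumes "0 < x" "x \<le> y" "2*y \<le> real n"
  shows "fr n y \<le> fr n x"
proof -
  have "x * (real n - x) \<le> y * (real n - y)"
  proof -
    have "y * (real n - y) - x * (real n - x) = (y - x) * (real n - x - y)" by (simp add: algebra_simps)
    also have "\<dots> \<ge> 0" using assms by simp
    finally show ?thesis by simp
  qed
  moreover have "0 < x * (real n - x)" using assms by simp
  ultimately show ?thesis unfolding fr_def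
    by (intro divide_left_mono) (auto intro!: real_sqrt_le_mono mult_pos_pos)
qed

lemma fr_mono2:
  assumes "real n \<le> 2*x" "x \<le> y" "y < real n"
  shows "fr n x \<le> fr n y"
proof -
  have "y * (real n - y) \<le> x * (real n - x)"
  proof -
    have "x * (real n - x) - y * (real n - y) = (y - x) * (x + y - real n)" by (simp add: algebra_simps)
    also have "\<dots> \<ge> 0" using assms by simp
    finally show ?thesis by simp
  qed
  moreover have "0 < y * (real n - y)" using assms by simp
  ultimately show ?thesis unfolding fr_def
    by (intro divide_left_mono) (auto intro!: real_sqrt_le_mono mult_pos_pos)
qed

lemma U1: assumes "2 * Suc j \<le> n" shows "fr n (Suc j) \<le> G n (Suc j) - G n j"
proof -
  obtain z where z: "real j < z" "z < real (Suc j)" "G n (Suc j) - G n j = (real (Suc j) - real j) * fr n z"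
    using G_mvt[of "real j" "real (Suc j)" n] assms by auto
  have "fr n (Suc j) \<le> fr n z" using z assms by (intro fr_mono1) auto
  with z show ?thesis by simp
qed

lemma U2: assumes "n \<le> 2 * Suc j" "Suc (Suc j) \<le> n" shows "fr n (Suc j) \<le> G n (Suc (Suc j)) - G n (Suc j)"
proof -
  obtain z where z: "real (Suc j) < z" "z < real (Suc (Suc j))" "G n (Suc (Suc j)) - G n (Suc j) = (real (Suc (Suc j)) - real (Suc j)) * fr n z"
    using G_mvt[of "real (Suc j)" "real (Suc (Suc j))" n] assms by auto
  have "fr n (Suc j) \<le> fr n z" using z assms by (intro fr_mono2) auto
  with z show ?thesis by simp
qed

lemma L1: assumes "2 * Suc (Suc j) \<le> n" shows "G n (Suc (Suc j)) - G n (Suc j) \<le> fr n (Suc j)"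
proof -
  obtain z where z: "real (Suc j) < z" "z < real (Suc (Suc j))" "G n (Suc (Suc j)) - G n (Suc j) = (real (Suc (Suc j)) - real (Suc j)) * fr n z"
    using G_mvt[of "real (Suc j)" "real (Suc (Suc j))" n] assms by auto
  have "fr n z \<le> fr n (Suc j)" using z assms by (intro fr_mono1) auto
  with z show ?thesis by simp
qed

lemma L2: assumes "n \<le> 2 * j" "Suc j < n" shows "G n (Suc j) - G n j \<le> fr n (Suc j)"
proof -
  obtain z where z: "real j < z" "z < real (Suc j)" "G n (Suc j) - G n j = (real (Suc j) - real j) * fr n z"
    using G_mvt[of "real j" "real (Suc j)" n] assms by auto
  have "fr n z \<le> fr n (Suc j)" using z assms by (intro fr_mono2) auto
  with z show ?thesis by simp
qed

lemma G_mono: "0 < n \<Longrightarrow> 0 \<le> x \<Longrightarrow> x \<le> y \<Longrightarrow> y \<le> real n \<Longrightarrow> G n x \<le> G n y"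
  unfolding G_def by (rule arcsin_le_arcsin) (auto simp: field_simps)

lemma fr_nonneg: "0 \<le> x \<Longrightarrow> x \<le> real n \<Longrightarrow> 0 \<le> fr n x" unfolding fr_def by simp

lemma upper:
  assumes "2 \<le> n"
  shows "(\<Sum>j<n-1. fr n (Suc j)) \<le> pi"
proof -
  define h where "h = n div 2"
  have hn: "h \<le> n - 1" "2*h \<le> n" "n \<le> 2*h+1" using assms by (auto simp: h_def)
  have split: "{..<n-1} = {..<h} \<union> {h..<n-1}" using hn by auto
  have s1: "(\<Sum>j<h. fr n (Suc j)) \<le> (\<Sum>j<h. G n (Suc j) - G n j)"
    by (intro sum_mono U1) (use hn in auto)
  have s2: "(\<Sum>j\<in>{h..<n-1}. fr n (Suc j)) \<le> (\<Sum>j\<in>{h..<n-1}. G n (Suc (Suc j)) - G n (Suc j))"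
    by (intro sum_mono U2) (use hn in auto)
  have t1: "(\<Sum>j<h. G n (Suc j) - G n j) = G n h - G n 0"
    using sum_lessThan_telescope[of "\<lambda>j. G n (real j)" h] by simp
  have t2: "(\<Sum>j\<in>{h..<n-1}. G n (Suc (Suc j)) - G n (Suc j)) = G n (Suc (n-1)) - G n (Suc h)"
    using sum_Suc_diff'[of h "n-1" "\<lambda>j. G n (real (Suc j))"] hn by simp
  have "(\<Sum>j<n-1. fr n (Suc j)) = (\<Sum>j<h. fr n (Suc j)) + (\<Sum>j\<in>{h..<n-1}. fr n (Suc j))"
    unfolding split by (rule sum.union_disjoint) auto
  also have "\<dots> \<le> G n h - G n 0 + (G n n - G n (Suc h))"
    using s1 s2 t1 t2 assms by simp
  also have "\<dots> \<le> G n n - G n 0"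
    using G_mono[of n "real h" "real (Suc h)"] hn assms by simp
  also have "\<dots> = pi" using assms by (simp add: G_def)
  finally show ?thesis .
qed

lemma lower:
  assumes "2 \<le> n"
  shows "2 * arcsin (1 - 2/real n) - 2 * arcsin (1/real n) \<le> (\<Sum>j<n-1. fr n (Suc j))"
proof -
  define h where "h = n div 2"
  have hn: "1 \<le> h" "h \<le> n - 1" "2*h \<le> n" "n \<le> 2*h+1" using assms by (auto simp: h_def)
  have sub: "{..<h-1} \<union> {n-h..<n-1} \<subseteq> {..<n-1}" using hn by auto
  have disj: "{..<h-1} \<inter> {n-h..<n-1} = {}" using hn by auto
  have s1: "(\<Sum>j<h-1. G n (Suc (Suc j)) - G n (Suc j)) \<le> (\<Sum>j<h-1. fr n (Suc j))"
    by (intro sum_mono L1) (use hn in auto)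
  have s2: "(\<Sum>j\<in>{n-h..<n-1}. G n (Suc j) - G n j) \<le> (\<Sum>j\<in>{n-h..<n-1}. fr n (Suc j))"
    by (intro sum_mono L2) (use hn in auto)
  have t1: "(\<Sum>j<h-1. G n (Suc (Suc j)) - G n (Suc j)) = G n h - G n 1"
    using sum_lessThan_telescope[of "\<lambda>j. G n (real (Suc j))" "h-1"] hn by simp
  have t2: "(\<Sum>j\<in>{n-h..<n-1}. G n (Suc j) - G n j) = G n (n-1) - G n (n-h)"
    using sum_Suc_diff'[of "n-h" "n-1" "\<lambda>j. G n (real j)"] hn by simp
  have nr: "real n \<ge> 2" using assms by simp
  have rh: "real n \<le> 2 * real h + 1" using hn by linarith
  have k1: "-(1/real n) \<le> 2*real h/real n - 1"
  proof -
    have "2*real h/real n - 1 - (-(1/real n)) = (2*real h + 1 - real n)/real n" using nr by (simp add: field_simps)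
    also have "\<dots> \<ge> 0" using rh nr by simp
    finally show ?thesis by simp
  qed
  have k2: "2*real h/real n - 1 \<le> 1" using hn nr by (simp add: field_simps)
  have g1: "G n h \<ge> arcsin (- (1/real n))"
    unfolding G_def using k1 k2 nr by (intro arcsin_le_arcsin) auto
  have k3: "2*real (n-h)/real n - 1 \<le> 1/real n"
  proof -
    have "1/real n - (2*real (n-h)/real n - 1) = (2*real h + 1 - real n)/real n" using nr hn by (simp add: field_simps of_nat_diff)
    also have "\<dots> \<ge> 0" using rh nr by simp
    finally show ?thesis by simp
  qed
  have k4: "-1 \<le> 2*real (n-h)/real n - 1" using hn nr by (simp add: field_simps)
  have g2: "G n (real (n-h)) \<le> arcsin (1/real n)"
    unfolding G_def using k3 k4 nr by (intro arcsin_le_arcsin) auto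
  have g3: "G n 1 = - arcsin (1 - 2/real n)"
  proof -
    have e: "2 * 1 / real n - 1 = - (1 - 2/real n)" by simp
    have "-1 \<le> 1 - 2/real n" "1 - 2/real n \<le> 1" using nr by (auto simp: field_simps)
    then show ?thesis unfolding G_def e by (rule arcsin_minus)
  qed
  have g4: "G n (real (n-1)) = arcsin (1 - 2/real n)"
  proof -
    have "2 * real (n-1) / real n - 1 = 1 - 2/real n" using nr assms by (simp add: field_simps of_nat_diff)
    then show ?thesis unfolding G_def by simp
  qed
  have o1: "0 \<le> 1/real n" "1/real n \<le> 1" using nr by auto
  have am: "arcsin (- (1/real n)) = - arcsin (1/real n)" using o1 by (intro arcsin_minus) linarith+
  have "2 * arcsin (1 - 2/real n) - 2 * arcsin (1/real n) \<le> G n h - G n 1 + (G n (n-1) - G n (n-h))"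
    using g1 g2 g3 g4 am by simp
  also have "\<dots> \<le> (\<Sum>j<h-1. fr n (Suc j)) + (\<Sum>j\<in>{n-h..<n-1}. fr n (Suc j))"
    using s1 s2 t1 t2 by simp
  also have "\<dots> = (\<Sum>j\<in>{..<h-1} \<union> {n-h..<n-1}. fr n (Suc j))"
    by (rule sum.union_disjoint[symmetric]) (use disj in auto)
  also have "\<dots> \<le> (\<Sum>j<n-1. fr n (Suc j))"
    by (rule sum_mono2[OF _ sub]) (auto intro!: fr_nonneg)
  finally show ?thesis .
qed

lemma lim_lower: "(\<lambda>n. 2 * arcsin (1 - 2/real n) - 2 * arcsin (1/real n)) \<longlonglongrightarrow> pi"
proof -
  have a: "(\<lambda>n. 1 - 2/real n) \<longlonglongrightarrow> 1"
    using tendsto_diff[OF tendsto_const[of 1] tendsto_mult_right_zero[OF lim_inverse_n, of 2]]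
    by (simp add: divide_inverse)
  have b: "(\<lambda>n. 1/real n) \<longlonglongrightarrow> 0" using lim_inverse_n by (simp add: divide_inverse)
  have ev1: "\<forall>\<^sub>F n in sequentially. 1 - 2/real n \<in> {-1..1}"
    using eventually_ge_at_top[of "1::nat"] by eventually_elim (auto simp: field_simps)
  have ev2: "\<forall>\<^sub>F n in sequentially. 1/real n \<in> {-1..1}"
    using eventually_ge_at_top[of "1::nat"] by eventually_elim (auto simp: field_simps)
  have c1: "(\<lambda>n. arcsin (1 - 2/real n)) \<longlonglongrightarrow> arcsin 1"
    by (rule continuous_on_tendsto_compose[OF continuous_on_arcsin' a _ ev1]) auto
  have c2: "(\<lambda>n. arcsin (1/real n)) \<longlonglongrightarrow> arcsin 0"
    by (rule continuous_on_tendsto_compose[OF continuous_on_arcsin' b _ ev2]) auto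
  have "(\<lambda>n. 2 * arcsin (1 - 2/real n) - 2 * arcsin (1/real n)) \<longlonglongrightarrow> 2 * arcsin 1 - 2 * arcsin 0"
    by (intro tendsto_intros c1 c2)
  then show ?thesis by simp
qed


lemma S_lim: "(\<lambda>n. \<Sum>j<n-1. fr n (Suc j)) \<longlonglongrightarrow> pi"
proof (rule real_tendsto_sandwich[OF _ _ lim_lower tendsto_const])
  show "\<forall>\<^sub>F n in sequentially. 2 * arcsin (1 - 2/real n) - 2 * arcsin (1/real n) \<le> (\<Sum>j<n-1. fr n (Suc j))"
    using eventually_ge_at_top[of "2::nat"] by eventually_elim (rule lower)
  show "\<forall>\<^sub>F n in sequentially. (\<Sum>j<n-1. fr n (Suc j)) \<le> pi"
    using eventually_ge_at_top[of "2::nat"] by eventually_elim (rule upper)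
qed

lemma aux_div: "(s::real) > 0 \<Longrightarrow> (s * a) / (p * s) = a / p"
  using mult_divide_mult_cancel_left[of s a p] by (simp add: mult.commute)

lemma GG_eq:
  assumes "3 \<le> n"
  shows "GG (path_V n) (path_E n) / (pi * sqrt (real n - 2)) = (\<Sum>j<n-1. fr n (Suc j)) / pi"
proof -
  have t: "sqrt ((real (Suc i) + real (n - Suc i) - 2) / (real (Suc i) * real (n - Suc i)))
      = sqrt (real n - 2) * fr n (Suc i)" if "i < n - 1" for i
  proof -
    have "real (n - Suc i) = real n - real (Suc i)" using that by (simp add: of_nat_diff)
    then show ?thesis by (simp add: fr_def real_sqrt_divide)
  qed
  have eq: "GG (path_V n) (path_E n) = sqrt (real n - 2) * (\<Sum>j<n-1. fr n (Suc j))"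
    unfolding GG_path sum_distrib_left by (rule sum.cong[OF refl], rule t, simp)
  have pos: "sqrt (real n - 2) > 0" using assms by simp
  show ?thesis unfolding eq by (rule aux_div[OF pos])
qed

theorem corollary4:
  shows "(\<lambda>n. GG (path_V n) (path_E n) / (pi * sqrt (real n - 2))) \<longlonglongrightarrow> 1"
proof -
  have "(\<lambda>n. (\<Sum>j<n-1. fr n (Suc j)) / pi) \<longlonglongrightarrow> pi / pi"
    by (rule tendsto_divide[OF S_lim tendsto_const pi_neq_zero])
  then have l: "(\<lambda>n. (\<Sum>j<n-1. fr n (Suc j)) / pi) \<longlonglongrightarrow> 1" by simp
  have ev: "\<forall>\<^sub>F n in sequentially. (\<Sum>j<n-1. fr n (Suc j)) / pi = GG (path_V n) (path_E n) / (pi * sqrt (real n - 2))"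
    using eventually_ge_at_top[of "3::nat"] by eventually_elim (rule GG_eq[symmetric])
  show ?thesis using Lim_transform_eventually[OF l ev] .
qed


end
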